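(* Let $f:E_A^{\mathbb N}\to\mathbb R$ be a strongly regular Hölder-type function, $\delta>0$ with $P(\delta f)=0$, and fix $\rho\in E_A^{\mathbb N}$. Define, for $T>0$, $$m(T):=\sup\{|\omega|:\omega\in E^*_\rho,\ S_{|\omega'|}f(\omega'\rho)\ge -T\ \text{for all }\omega'\in E^*_\rho\text{ with }|\omega'|\le|\omega|\},$$ $$M(T):=\sup\{|\omega|:\omega\in E^*_\rho,\ S_{|\omega|}f(\omega\rho)\ge -T\},$$ with the convention $\sup\emptyset=-\infty$. Then both limits $\lim_{T\to\infty}m(T)/T$ and $\lim_{T\to\infty}M(T)/T$ exist (in the extended real line).
   Context: $E$ is a countable set, $A:E\times E\to\{0,1\}$, $E_A^{\mathbb N}$ the set of sequences $\rho$ with $A_{\rho_i\rho_{i+1}}=1$ for all $i$, $E_A^n$ the admissible words of length $n$, $E_A^*=\bigcup_{n\ge1}E_A^n$. The subshift is finitely irreducible: there is a finite set $\Omega$ of words such that for all $e,e'\in E$ some $\omega\in\Omega$ makes $e\omega e'$ admissible. $E^*_\rho=\{\omega\in E_A^*:\omega\rho \text{ admissible}\}$. $\sigma$ is the shift, $S_nf=\sum_{j<n}f\circ\sigma^j$, $[\omega]$ the cylinder of sequences beginning with $\omega$. $|\rho\wedge\rho'|$ is the length of the common initial block; for $\alpha>0$, $V_\alpha(f)=\sup_{n\ge1}\sup\{|f(\rho)-f(\rho')|e^{\alpha(n-1)}:|\rho\wedge\rho'|\ge n\}$, and $f$ is Hölder-type if $V_\alpha(f)<\infty$. $P(g)=\lim_n\frac1n\log\sum_{\omega\in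 E_A^n}\exp(\sup_{[\omega]}S_ng)$; a real $g$ is summable if $\sum_e\exp(\sup_{[e]}g)<\infty$. $f$ is strongly regular if $P(xf)=0$ for some $x>0$ and $0<P(xf)<\infty$ for some $x>0$. *)

theory Defs
  imports "HOL-Analysis.Analysis"
begin

text \<open>The alphabet E is a countable type 'e; the incidence matrix is A :: 'e => 'e => bool.
  Sequences are functions nat => 'e, finite words are lists.\<close>

definition adm_seq :: "('e \<Rightarrow> 'e \<Rightarrow> bool) \<Rightarrow> (nat \<Rightarrow> 'e) \<Rightarrow> bool" where
  "adm_seq A \<rho> \<longleftrightarrow> (\<forall>i. A (\<rho> i) (\<rho> (Suc i)))"

definition adm_word :: "('e \<Rightarrow> 'e \<Rightarrow> bool) \<Rightarrow> 'e list \<Rightarrow> bool" where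
  "adm_word A w \<longleftrightarrow> (\<forall>i. Suc i < length w \<longrightarrow> A (w ! i) (w ! Suc i))"

definition words :: "('e \<Rightarrow> 'e \<Rightarrow> bool) \<Rightarrow> nat \<Rightarrow> 'e list set" where
  "words A n = {w. length w = n \<and> adm_word A w}"

definition words_star :: "('e \<Rightarrow> 'e \<Rightarrow> bool) \<Rightarrow> 'e list set" where
  "words_star A = {w. w \<noteq> [] \<and> adm_word A w}"

definition finitely_irreducible :: "('e \<Rightarrow> 'e \<Rightarrow> bool) \<Rightarrow> bool" where
  "finitely_irreducible A \<longleftrightarrow>
     (\<exists>\<Omega>. finite \<Omega> \<and> (\<forall>e e'. \<exists>\<omega>\<in>\<Omega>. adm_word A (e # \<omega> @ [e'])))"

definition cat :: "'e list \<Rightarrow> (nat \<Rightarrow> 'e) \<Rightarrow> (nat \<Rightarrow> 'e)" where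
  "cat w \<rho> = (\<lambda>i. if i < length w then w ! i else \<rho> (i - length w))"

definition shift :: "(nat \<Rightarrow> 'e) \<Rightarrow> (nat \<Rightarrow> 'e)" where
  "shift \<rho> = (\<lambda>i. \<rho> (Suc i))"

definition birk_sum :: "((nat \<Rightarrow> 'e) \<Rightarrow> real) \<Rightarrow> nat \<Rightarrow> (nat \<Rightarrow> 'e) \<Rightarrow> real" where
  "birk_sum f n \<rho> = (\<Sum>j<n. f ((shift ^^ j) \<rho>))"

definition cyl :: "('e \<Rightarrow> 'e \<Rightarrow> bool) \<Rightarrow> 'e list \<Rightarrow> (nat \<Rightarrow> 'e) set" where
  "cyl A w = {\<rho>. adm_seq A \<rho> \<and> (\<forall>i<length w. \<rho> i = w ! i)}"

definition words_before :: "('e \<Rightarrow> 'e \<Rightarrow> bool) \<Rightarrow> (nat \<Rightarrow> 'e) \<Rightarrow> 'e list set" where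
  "words_before A \<rho> = {w \<in> words_star A. adm_seq A (cat w \<rho>)}"

definition holder_type :: "('e \<Rightarrow> 'e \<Rightarrow> bool) \<Rightarrow> ((nat \<Rightarrow> 'e) \<Rightarrow> real) \<Rightarrow> bool" where
  "holder_type A f \<longleftrightarrow> (\<exists>\<alpha>>0. \<exists>C. \<forall>n\<ge>1. \<forall>\<rho> \<rho>'. adm_seq A \<rho> \<and> adm_seq A \<rho>' \<and>
       (\<forall>i<n. \<rho> i = \<rho>' i) \<longrightarrow> \<bar>f \<rho> - f \<rho>'\<bar> * exp (\<alpha> * (real n - 1)) \<le> C)"

definition ln_enn :: "ennreal \<Rightarrow> ereal" where
  "ln_enn z = (if z = \<infinity> then \<infinity> else if z = 0 then -\<infinity> else ereal (ln (enn2real z)))"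

definition part_fun :: "('e \<Rightarrow> 'e \<Rightarrow> bool) \<Rightarrow> ((nat \<Rightarrow> 'e) \<Rightarrow> real) \<Rightarrow> nat \<Rightarrow> ennreal" where
  "part_fun A g n = (\<Sum>\<^sub>\<infinity> w \<in> words A n.
      ennreal (exp (SUP \<rho>\<in>cyl A w. birk_sum g n \<rho>)))"

definition pressure :: "('e \<Rightarrow> 'e \<Rightarrow> bool) \<Rightarrow> ((nat \<Rightarrow> 'e) \<Rightarrow> real) \<Rightarrow> ereal" where
  "pressure A g = lim (\<lambda>n. ln_enn (part_fun A g n) / ereal (real n))"

definition strongly_regular :: "('e \<Rightarrow> 'e \<Rightarrow> bool) \<Rightarrow> ((nat \<Rightarrow> 'e) \<Rightarrow> real) \<Rightarrow> bool" where
  "strongly_regular A f \<longleftrightarrow>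
     (\<exists>x>0. pressure A (\<lambda>\<rho>. x * f \<rho>) = 0) \<and>
     (\<exists>x>0. 0 < pressure A (\<lambda>\<rho>. x * f \<rho>) \<and> pressure A (\<lambda>\<rho>. x * f \<rho>) < \<infinity>)"

definition m_fun :: "('e \<Rightarrow> 'e \<Rightarrow> bool) \<Rightarrow> ((nat \<Rightarrow> 'e) \<Rightarrow> real) \<Rightarrow> (nat \<Rightarrow> 'e) \<Rightarrow> real \<Rightarrow> ereal" where
  "m_fun A f \<rho> T = Sup {ereal (real (length w)) | w. w \<in> words_before A \<rho> \<and>
      (\<forall>w'\<in>words_before A \<rho>. length w' \<le> length w \<longrightarrow>
          birk_sum f (length w') (cat w' \<rho>) \<ge> - T)}"

definition M_fun :: "('e \<Rightarrow> 'e \<Rightarrow> bool) \<Rightarrow> ((nat \<Rightarrow> 'e) \<Rightarrow> real) \<Rightarrow> (nat \<Rightarrow> 'e) \<Rightarrow> real \<Rightarrow> ereal" where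
  "M_fun A f \<rho> T = Sup {ereal (real (length w)) | w. w \<in> words_before A \<rho> \<and>
      birk_sum f (length w) (cat w \<rho>) \<ge> - T}"

end

theory Submission
  imports Defs
begin


lemma lim_exists_up:
  fixes \<phi> :: "real \<Rightarrow> ereal"
  assumes H: "\<And>y b. y < b \<Longrightarrow> frequently (\<lambda>T. b < \<phi> T) at_top \<Longrightarrow> eventually (\<lambda>T. y < \<phi> T) at_top"
  shows "\<exists>L. (\<phi> \<longlongrightarrow> L) at_top"
proof -
  have "Limsup at_top \<phi> \<le> Liminf at_top \<phi>"
  proof (rule dense_le)
    fix x assume x: "x < Limsup at_top \<phi>"
    have fr: "frequently (\<lambda>T. x < \<phi> T) at_top"
    proof -
      from x obtain y where y: "y > x" "\<not> eventually (\<lambda>T. y > \<phi> T) at_top"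
        by (metis not_le Limsup_le_iff)
      from y(2) have "frequently (\<lambda>T. \<not> y > \<phi> T) at_top" by (simp add: not_eventually)
      then show ?thesis by (rule frequently_elim1) (use y(1) in auto)
    qed
    show "x \<le> Liminf at_top \<phi>"
      unfolding le_Liminf_iff using H fr by blast
  qed
  then have "Liminf at_top \<phi> = Limsup at_top \<phi>"
    using Liminf_le_Limsup[of at_top \<phi>] by simp
  then show ?thesis using tendsto_iff_Liminf_eq_Limsup[of at_top \<phi>] by auto
qed

lemma lim_exists_down:
  fixes \<phi> :: "real \<Rightarrow> ereal"
  assumes H: "\<And>y b. y < b \<Longrightarrow> frequently (\<lambda>T. \<phi> T < y) at_top \<Longrightarrow> eventually (\<lambda>T. \<phi> T < b) at_top"
  shows "\<exists>L. (\<phi> \<longlongrightarrow> L) at_top"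
proof -
  have "Limsup at_top \<phi> \<le> Liminf at_top \<phi>"
  proof (rule dense_ge)
    fix x assume x: "Liminf at_top \<phi> < x"
    have fr: "frequently (\<lambda>T. \<phi> T < x) at_top"
    proof -
      from x obtain y where y: "y < x" "\<not> eventually (\<lambda>T. y < \<phi> T) at_top"
        by (metis not_le le_Liminf_iff)
      from y(2) have "frequently (\<lambda>T. \<not> y < \<phi> T) at_top" by (simp add: not_eventually)
      then show ?thesis by (rule frequently_elim1) (use y(1) in auto)
    qed
    show "Limsup at_top \<phi> \<le> x"
      unfolding Limsup_le_iff using H fr by blast
  qed
  then have "Liminf at_top \<phi> = Limsup at_top \<phi>"
    using Liminf_le_Limsup[of at_top \<phi>] by simp
  then show ?thesis using tendsto_iff_Liminf_eq_Limsup[of at_top \<phi>] by auto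
qed



lemma freq_at_top_real: "frequently P (at_top::real filter) \<Longrightarrow> \<exists>T\<ge>N. P T"
  unfolding frequently_def eventually_at_top_linorder by (metis not_le order.strict_iff_not)

lemma abstract_M:
  fixes W :: "'w set" and len :: "'w \<Rightarrow> nat" and S :: "'w \<Rightarrow> real" and D :: real
  assumes W1: "w1 \<in> W"
    and D: "D \<ge> 0"
    and rep: "\<And>w q. w \<in> W \<Longrightarrow> q \<ge> 1 \<Longrightarrow> \<exists>w'\<in>W. real q * real (len w) \<le> real (len w') \<and> real q * (S w - D) \<le> S w'"
  shows "\<exists>L. ((\<lambda>T. Sup {ereal (real (len w)) | w. w \<in> W \<and> S w \<ge> -T} / ereal T) \<longlongrightarrow> L) at_top"
proof -
  define M where "M T = Sup {ereal (real (len w)) | w. w \<in> W \<and> S w \<ge> -T}" for T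
  have Mge: "ereal (real (len w)) \<le> M T" if "w \<in> W" "S w \<ge> -T" for w T
    unfolding M_def using that by (intro Sup_upper) auto
  have ev0: "eventually (\<lambda>T. 0 \<le> M T / ereal T) at_top"
    unfolding eventually_at_top_linorder
  proof (intro exI[of _ "max 1 (- S w1)"] allI impI)
    fix T assume T: "max 1 (- S w1) \<le> T"
    have "ereal (real (len w1)) \<le> M T" using T by (intro Mge[OF W1]) auto
    then have "0 \<le> M T" by (rule order.trans[rotated]) simp
    then show "0 \<le> M T / ereal T" using T by (simp add: ereal_le_divide_pos)
  qed
  have "\<exists>L. ((\<lambda>T. M T / ereal T) \<longlongrightarrow> L) at_top"
  proof (rule lim_exists_up)
    fix y b :: ereal assume yb: "y < b" and fr: "frequently (\<lambda>T. b < M T / ereal T) at_top"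
    show "eventually (\<lambda>T. y < M T / ereal T) at_top"
    proof (cases "y < 0")
      case True then show ?thesis using ev0 by (auto elim: eventually_mono)
    next
      case False
      obtain b' where b': "y < ereal b'" "ereal b' < b" using ereal_dense2[OF yb] by blast
      have fr': "frequently (\<lambda>T. ereal b' < M T / ereal T) at_top"
        using fr by (rule frequently_elim1) (use b' in auto)
      obtain yr where yr: "y = ereal yr" using False b' by (cases y) auto
      have yr0: "0 \<le> yr" "yr < b'" using False b' yr by auto
      define T1 where "T1 = max 1 (yr * D / (b' - yr) + 1)"
      obtain T0 where T0: "T0 \<ge> T1" "ereal b' < M T0 / ereal T0"
        using freq_at_top_real[OF fr'] by blast
      have T0pos: "T0 > 0" "T0 \<ge> 1" using T0 unfolding T1_def by auto
      have "ereal T0 * ereal b' < M T0"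
        using T0(2) T0pos by (subst (asm) ereal_less_divide_pos) auto
      then have "ereal (T0 * b') < M T0" by simp
      then obtain w where w: "w \<in> W" "S w \<ge> -T0" "T0 * b' < real (len w)"
        unfolding M_def less_Sup_iff by auto
      define a where "a = real (len w)"
      define E where "E = T0 + D"
      have Epos: "E > 0" using T0pos D unfolding E_def by auto
      have "yr * D / (b' - yr) < T0" using T0(1) unfolding T1_def by auto
      then have "yr * D < T0 * (b' - yr)" using yr0 by (simp add: divide_less_eq mult.commute)
      then have "yr * E < T0 * b'" unfolding E_def by (simp add: algebra_simps)
      then have yE: "yr * E < a" using w(3) unfolding a_def by linarith
      then have gap: "a / E - yr > 0" using Epos by (simp add: field_simps)
      define T2 where "T2 = max E (a / (a / E - yr) + 1)"
      show ?thesis unfolding eventually_at_top_linorder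
      proof (intro exI[of _ T2] allI impI)
        fix T assume T: "T2 \<le> T"
        have TE: "E \<le> T" "a / (a / E - yr) < T" using T unfolding T2_def by auto
        have Tpos: "T > 0" using TE Epos by linarith
        define q where "q = nat \<lfloor>T / E\<rfloor>"
        have q1: "T / E \<ge> 1" using TE Epos by simp
        have qle: "real q \<le> T / E" unfolding q_def using q1 by (simp add: of_nat_nat)
        have qgt: "real q > T / E - 1" unfolding q_def using q1 by (simp add: of_nat_nat)
        have "q \<ge> 1" unfolding q_def using q1 by (simp add: le_nat_iff)
        from rep[OF w(1) this] obtain w' where w': "w' \<in> W" "real q * a \<le> real (len w')"
          "real q * (S w - D) \<le> S w'" unfolding a_def by blast
        have "S w - D \<ge> - E" using w(2) unfolding E_def by simp
        then have "real q * (S w - D) \<ge> real q * (- E)" by (intro mult_left_mono) auto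
        moreover have "real q * E \<le> T" using qle Epos by (simp add: le_divide_eq)
        ultimately have "S w' \<ge> -T" using w'(3) by linarith
        then have M1: "ereal (real (len w')) \<le> M T" using Mge w'(1) by blast
        have a0: "a \<ge> 0" unfolding a_def by simp
        have "(T / E - 1) * a \<le> real q * a" using qgt a0 by (intro mult_right_mono) auto
        moreover have "T * yr < (T / E - 1) * a"
        proof -
          have "a < T * (a / E - yr)" using TE(2) gap by (simp add: divide_less_eq)
          then show ?thesis using Epos by (simp add: algebra_simps)
        qed
        ultimately have "T * yr < real (len w')" using w'(2) by linarith
        then have "ereal (T * yr) < ereal (real (len w'))" by simp
        then have "ereal (T * yr) < M T" using M1 by (rule less_le_trans)
        then have "ereal T * ereal yr < M T" by simp
        then show "y < M T / ereal T" unfolding yr using Tpos by (subst ereal_less_divide_pos) auto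
      qed
    qed
  qed
  then show ?thesis unfolding M_def .
qed



lemma abstract_m:
  fixes W :: "'w set" and len :: "'w \<Rightarrow> nat" and S :: "'w \<Rightarrow> real" and D :: real and K :: nat
  assumes ex: "\<And>n. n \<ge> 1 \<Longrightarrow> \<exists>w\<in>W. len w = n"
    and D: "D \<ge> 0"
    and rep: "\<And>w q. w \<in> W \<Longrightarrow> q \<ge> 1 \<Longrightarrow> \<exists>w'\<in>W. real (len w') \<le> real q * (real (len w) + real K) \<and> S w' \<le> real q * (S w + D)"
  shows "\<exists>L. ((\<lambda>T. Sup {ereal (real (len w)) | w. w \<in> W \<and> (\<forall>w'\<in>W. len w' \<le> len w \<longrightarrow> S w' \<ge> -T)} / ereal T) \<longlongrightarrow> L) at_top"
proof -
  define m where "m T = Sup {ereal (real (len w)) | w. w \<in> W \<and> (\<forall>w'\<in>W. len w' \<le> len w \<longrightarrow> S w' \<ge> -T)}" for T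
  have "\<exists>L. ((\<lambda>T. m T / ereal T) \<longlongrightarrow> L) at_top"
  proof (rule lim_exists_down)
    fix y b :: ereal assume yb: "y < b" and fr: "frequently (\<lambda>T. m T / ereal T < y) at_top"
    show "eventually (\<lambda>T. m T / ereal T < b) at_top"
    proof (cases "y \<le> 0")
      case True
      show ?thesis unfolding eventually_at_top_linorder
      proof (intro exI[of _ 1] allI impI)
        fix T :: real assume T: "1 \<le> T"
        obtain T0 where T0: "T0 \<ge> T" "m T0 / ereal T0 < y" using freq_at_top_real[OF fr] by blast
        have "m T0 < 0"
        proof (rule ccontr)
          assume "\<not> m T0 < 0"
          then have "0 \<le> m T0 / ereal T0" using T T0 by (simp add: ereal_le_divide_pos)
          then show False using T0(2) True by simp
        qed
        have empty0: "{ereal (real (len w)) | w. w \<in> W \<and> (\<forall>w'\<in>W. len w' \<le> len w \<longrightarrow> S w' \<ge> -T0)} = {}"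
        proof (rule ccontr)
          assume "\<not> ?thesis"
          then obtain w where w: "w \<in> W" "\<forall>w'\<in>W. len w' \<le> len w \<longrightarrow> S w' \<ge> -T0" by auto
          have "ereal (real (len w)) \<le> m T0" unfolding m_def using w by (intro Sup_upper) auto
          then have "0 \<le> m T0" by (rule order.trans[rotated]) simp
          then show False using \<open>m T0 < 0\<close> by simp
        qed
        have "{ereal (real (len w)) | w. w \<in> W \<and> (\<forall>w'\<in>W. len w' \<le> len w \<longrightarrow> S w' \<ge> -T)} = {}"
        proof (rule ccontr)
          assume "\<not> ?thesis"
          then obtain w where "w \<in> W" "\<forall>w'\<in>W. len w' \<le> len w \<longrightarrow> S w' \<ge> -T" by auto
          then have "w \<in> W \<and> (\<forall>w'\<in>W. len w' \<le> len w \<longrightarrow> S w' \<ge> -T0)" using T0(1) by force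
          then show False using empty0 by blast
        qed
        then have "m T = -\<infinity>" unfolding m_def by (metis Sup_empty bot_ereal_def)
        then show "m T / ereal T < b" using yb T by auto
      qed
    next
      case False
      obtain b' where b': "y < ereal b'" "ereal b' < b" using ereal_dense2[OF yb] by blast
      obtain yr where yr: "y = ereal yr" using False b' by (cases y) auto
      have yr0: "0 < yr" "yr < b'" using False b' yr by auto
      define T1 where "T1 = max 1 ((1 + real K + b' * D) / (b' - yr) + D + 1)"
      obtain T0 where T0: "T0 \<ge> T1" "m T0 / ereal T0 < y"
        using freq_at_top_real[OF fr] by blast
      have T0pos: "T0 > 0" using T0 unfolding T1_def by auto
      have "(1 + real K + b' * D) / (b' - yr) \<ge> 0" using yr0 D by simp
      then have T0D: "T0 \<ge> D + 1" using T0(1) unfolding T1_def by auto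
      have "(1 + real K + b' * D) / (b' - yr) < T0" using T0(1) D unfolding T1_def by auto
      then have key0: "1 + real K + b' * D < T0 * (b' - yr)" using yr0 by (simp add: divide_less_eq mult.commute)
      have "m T0 < ereal T0 * ereal yr"
        using T0(2) T0pos unfolding yr by (subst (asm) ereal_divide_less_pos) auto
      then have mT0: "m T0 < ereal (T0 * yr)" by simp
      define n0 where "n0 = nat \<lfloor>yr * T0\<rfloor> + 1"
      have n0a: "real n0 > yr * T0" unfolding n0_def using yr0 T0pos by (simp add: of_nat_nat) linarith
      have n0b: "real n0 \<le> yr * T0 + 1" unfolding n0_def using yr0 T0pos by (simp add: of_nat_nat)
      have "n0 \<ge> 1" unfolding n0_def by simp
      from ex[OF this] obtain w0 where w0: "w0 \<in> W" "len w0 = n0" by blast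
      have "\<not> (\<forall>w'\<in>W. len w' \<le> len w0 \<longrightarrow> S w' \<ge> -T0)"
      proof
        assume H: "\<forall>w'\<in>W. len w' \<le> len w0 \<longrightarrow> S w' \<ge> -T0"
        have "ereal (real (len w0)) \<le> m T0" unfolding m_def using w0 H by (intro Sup_upper) auto
        then have "ereal (real n0) < ereal (T0 * yr)" using mT0 w0(2) by (metis le_less_trans)
        then show False using n0a by (simp add: mult.commute)
      qed
      then obtain u where u: "u \<in> W" "len u \<le> n0" "S u < -T0" using w0 by force
      define E where "E = T0 - D"
      have Epos: "E \<ge> 1" using T0D unfolding E_def by simp
      define c where "c = real n0 + real K"
      have cpos: "c \<ge> 1" unfolding c_def using \<open>n0 \<ge> 1\<close> by simp
      have "c < b' * E" unfolding c_def E_def using n0b key0 by (simp add: algebra_simps)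
      then have gap: "b' - c / E > 0" using Epos by (simp add: field_simps)
      define T2 where "T2 = max 1 (c / (b' - c / E) + 1)"
      show ?thesis unfolding eventually_at_top_linorder
      proof (intro exI[of _ T2] allI impI)
        fix T assume T: "T2 \<le> T"
        have TT: "1 \<le> T" "c / (b' - c / E) < T" using T unfolding T2_def by auto
        define q where "q = nat \<lceil>T / E\<rceil>"
        have TE0: "T / E > 0" using TT Epos by simp
        have qge: "real q \<ge> T / E" unfolding q_def using TE0 by (simp add: of_nat_nat)
        have qlt: "real q < T / E + 1" unfolding q_def using TE0 using ceiling_correct[of "T / E"] by (simp add: of_nat_nat)
        have "real q > 0" using qge TE0 by linarith
        then have "q \<ge> 1" by simp
        from rep[OF u(1) this] obtain u' where u': "u' \<in> W"
          "real (len u') \<le> real q * (real (len u) + real K)" "S u' \<le> real q * (S u + D)" by blast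
        have "S u + D < - E" using u(3) unfolding E_def by simp
        then have "real q * (S u + D) \<le> real q * (- E)" by (intro mult_left_mono) auto
        moreover have "T \<le> real q * E" using qge Epos by (simp add: divide_le_eq)
        moreover have "real q * (S u + D) < real q * (- E)" 
          using \<open>S u + D < - E\<close> \<open>q \<ge> 1\<close> by (intro mult_strict_left_mono) auto
        ultimately have Su': "S u' < -T" using u'(3) by linarith
        have mT: "m T \<le> ereal (real (len u'))"
          unfolding m_def
        proof (rule Sup_least)
          fix x assume "x \<in> {ereal (real (len w)) | w. w \<in> W \<and> (\<forall>w'\<in>W. len w' \<le> len w \<longrightarrow> S w' \<ge> -T)}"
          then obtain w where w: "x = ereal (real (len w))" "w \<in> W" "\<forall>w'\<in>W. len w' \<le> len w \<longrightarrow> S w' \<ge> -T" by blast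
          have "len w < len u'" using w(3) u'(1) Su' by force
          then show "x \<le> ereal (real (len u'))" using w(1) by simp
        qed
        have "real (len u) + real K \<le> c" unfolding c_def using u(2) by simp
        then have "real (len u') \<le> real q * c" using u'(2) by (meson mult_left_mono of_nat_0_le_iff order.trans)
        also have "\<dots> < (T / E + 1) * c" using qlt cpos by (intro mult_strict_right_mono) auto
        also have "\<dots> < T * b'"
        proof -
          have "c < T * (b' - c / E)" using TT(2) gap by (simp add: divide_less_eq)
          then show ?thesis using Epos by (simp add: algebra_simps)
        qed
        finally have "ereal (real (len u')) < ereal (T * b')" by simp
        then have "m T < ereal (T * b')" using mT by (rule le_less_trans[rotated])
        then have "m T < ereal T * ereal b'" by simp
        then have "m T / ereal T < ereal b'" using TT by (subst ereal_divide_less_pos) auto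
        then show "m T / ereal T < b" using b'(2) by (rule less_trans)
      qed
    qed
  qed
  then show ?thesis unfolding m_def .
qed



lemma cat_Nil[simp]: "cat [] x = x" by (simp add: cat_def)

lemma shift_cat_Cons[simp]: "shift (cat (a#u) x) = cat u x"
  by (auto simp: shift_def cat_def fun_eq_iff)

lemma cat_append: "cat (u@v) x = cat u (cat v x)"
  by (auto simp: cat_def fun_eq_iff nth_append)

lemma cat_0: "cat u x 0 = (if u = [] then x 0 else hd u)"
  by (cases u) (auto simp: cat_def)

lemma cat_lt: "i < length u \<Longrightarrow> cat u x i = u ! i"
  by (simp add: cat_def)

lemma shift_pow_cat: "(shift^^length u) (cat u x) = x"
  by (induction u) (auto simp: funpow_Suc_right simp del: funpow.simps)

lemma shift_pow_apply: "(shift^^j) x i = x (i + j)"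
  by (induction j arbitrary: x) (auto simp: funpow_Suc_right shift_def simp del: funpow.simps)

lemma adm_seq_shift_pow: "adm_seq A x \<Longrightarrow> adm_seq A ((shift^^j) x)"
  unfolding adm_seq_def shift_pow_apply by simp

lemma adm_seq_Cons: "adm_seq A x \<longleftrightarrow> A (x 0) (x 1) \<and> adm_seq A (shift x)"
  unfolding adm_seq_def shift_def
  by (metis One_nat_def not0_implies_Suc)

lemma adm_word_Cons: "adm_word A (a#u) \<longleftrightarrow> adm_word A u \<and> (u \<noteq> [] \<longrightarrow> A a (hd u))"
proof
  assume H: "adm_word A (a#u)"
  have "adm_word A u" unfolding adm_word_def
  proof (intro allI impI)
    fix i assume "Suc i < length u"
    then show "A (u ! i) (u ! Suc i)" using H[unfolded adm_word_def, rule_format, of "Suc i"] by simp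
  qed
  moreover have "u \<noteq> [] \<longrightarrow> A a (hd u)"
    using H[unfolded adm_word_def, rule_format, of 0] by (cases u) auto
  ultimately show "adm_word A u \<and> (u \<noteq> [] \<longrightarrow> A a (hd u))" by blast
next
  assume H: "adm_word A u \<and> (u \<noteq> [] \<longrightarrow> A a (hd u))"
  show "adm_word A (a#u)" unfolding adm_word_def
  proof (intro allI impI)
    fix i assume i: "Suc i < length (a#u)"
    show "A ((a#u) ! i) ((a#u) ! Suc i)"
    proof (cases i)
      case 0 then show ?thesis using H i by (cases u) auto
    next
      case (Suc k) then show ?thesis using H i unfolding adm_word_def by auto
    qed
  qed
qed

lemma adm_word_Nil[simp]: "adm_word A []" by (simp add: adm_word_def)

lemma adm_word_append: "adm_word A (u@v) \<longleftrightarrow> adm_word A u \<and> adm_word A v \<and> (u \<noteq> [] \<and> v \<noteq> [] \<longrightarrow> A (last u) (hd v))"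
proof (induction u)
  case Nil then show ?case by simp
next
  case (Cons a u)
  show ?case
  proof (cases "u = []")
    case True then show ?thesis by (simp add: adm_word_Cons)
  next
    case False then show ?thesis using Cons by (simp add: adm_word_Cons) blast
  qed
qed

lemma adm_seq_cat: "adm_seq A (cat u x) \<longleftrightarrow> adm_word A u \<and> adm_seq A x \<and> (u \<noteq> [] \<longrightarrow> A (last u) (x 0))"
proof (induction u)
  case Nil then show ?case by simp
next
  case (Cons a u)
  have e: "adm_seq A (cat (a#u) x) \<longleftrightarrow> A a (cat u x 0) \<and> adm_seq A (cat u x)"
  proof -
    have c1: "cat (a#u) x 1 = cat u x 0"
      using shift_cat_Cons[of a u x] unfolding shift_def by (metis One_nat_def)
    have c0: "cat (a#u) x 0 = a" by (simp add: cat_def)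
    show ?thesis using adm_seq_Cons[of A "cat (a#u) x"] c1 c0 by simp
  qed
  show ?case
  proof (cases "u = []")
    case True then show ?thesis using e by (auto simp: adm_word_Cons)
  next
    case False then show ?thesis using e Cons by (simp add: adm_word_Cons cat_0) blast
  qed
qed

lemma birk_sum_add: "birk_sum f (m+n) x = birk_sum f m x + birk_sum f n ((shift^^m) x)"
proof (induction n)
  case 0 then show ?case by (simp add: birk_sum_def)
next
  case (Suc n)
  have "(shift^^(m+n)) x = (shift^^n) ((shift^^m) x)" by (metis add.commute comp_apply funpow_add)
  then show ?case using Suc by (simp add: birk_sum_def)
qed

lemma birk_sum_cat: "birk_sum f (length u + n) (cat u x) = birk_sum f (length u) (cat u x) + birk_sum f n x"
  using birk_sum_add[of f "length u" n "cat u x"] by (simp add: shift_pow_cat)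

lemma words_before_iff: "w \<in> words_before A \<rho> \<longleftrightarrow> w \<noteq> [] \<and> adm_seq A (cat w \<rho>)"
  unfolding words_before_def words_star_def using adm_seq_cat by blast



lemma holder_distortion:
  fixes f :: "(nat \<Rightarrow> 'e) \<Rightarrow> real"
  assumes al: "\<alpha> > 0"
    and H: "\<forall>n\<ge>1. \<forall>\<rho> \<rho>'. adm_seq A \<rho> \<and> adm_seq A \<rho>' \<and> (\<forall>i<n. \<rho> i = \<rho>' i) \<longrightarrow> \<bar>f \<rho> - f \<rho>'\<bar> * exp (\<alpha> * (real n - 1)) \<le> C"
    and x: "adm_seq A x" and y: "adm_seq A y" and agree: "\<forall>i<a. x i = y i"
  shows "\<bar>birk_sum f a x - birk_sum f a y\<bar> \<le> C / (1 - exp (-\<alpha>))"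
proof -
  define r where "r = exp (-\<alpha>)"
  have r: "0 < r" "r < 1" unfolding r_def using al by auto
  have C0: "C \<ge> 0" using H[rule_format, of 1 x x] x by simp
  have tm: "\<bar>f ((shift^^j) x) - f ((shift^^j) y)\<bar> \<le> C * r ^ (a - Suc j)" if j: "j < a" for j
  proof -
    have "\<bar>f ((shift^^j) x) - f ((shift^^j) y)\<bar> * exp (\<alpha> * (real (a - j) - 1)) \<le> C"
      using H[rule_format, of "a - j" "(shift^^j) x" "(shift^^j) y"] j agree
      by (simp add: adm_seq_shift_pow x y shift_pow_apply)
    moreover have "exp (\<alpha> * (real (a - j) - 1)) = 1 / r ^ (a - Suc j)"
    proof -
      have "real (a - j) - 1 = real (a - Suc j)" using j by simp
      then have "exp (\<alpha> * (real (a - j) - 1)) = exp (real (a - Suc j) * \<alpha>)" by (simp add: mult.commute)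
      also have "\<dots> = exp \<alpha> ^ (a - Suc j)" by (rule exp_of_nat_mult)
      also have "\<dots> = 1 / r ^ (a - Suc j)" unfolding r_def by (simp add: exp_minus power_inverse divide_inverse)
      finally show ?thesis .
    qed
    ultimately have "\<bar>f ((shift^^j) x) - f ((shift^^j) y)\<bar> / r ^ (a - Suc j) \<le> C" by simp
    moreover have "r ^ (a - Suc j) > 0" using r by simp
    ultimately show ?thesis by (simp add: pos_divide_le_eq)
  qed
  have "\<bar>birk_sum f a x - birk_sum f a y\<bar> = \<bar>\<Sum>j<a. f ((shift^^j) x) - f ((shift^^j) y)\<bar>"
    unfolding birk_sum_def by (simp add: sum_subtractf)
  also have "\<dots> \<le> (\<Sum>j<a. \<bar>f ((shift^^j) x) - f ((shift^^j) y)\<bar>)" by (rule sum_abs)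
  also have "\<dots> \<le> (\<Sum>j<a. C * r ^ (a - Suc j))" by (rule sum_mono) (use tm in auto)
  also have "\<dots> = (\<Sum>j<a. C * r ^ j)" by (rule sum.nat_diff_reindex)
  also have "\<dots> = C * (\<Sum>j<a. r ^ j)" by (simp add: sum_distrib_left)
  also have "\<dots> \<le> C * (1 / (1 - r))"
  proof (rule mult_left_mono[OF _ C0])
    have "(\<Sum>j<a. r ^ j) = (1 - r ^ a) / (1 - r)" using r by (simp add: sum_gp_strict)
    also have "\<dots> \<le> 1 / (1 - r)" using r by (intro divide_right_mono) auto
    finally show "(\<Sum>j<a. r ^ j) \<le> 1 / (1 - r)" .
  qed
  finally show ?thesis unfolding r_def by simp
qed

lemma letter_bound:
  fixes f :: "(nat \<Rightarrow> 'e) \<Rightarrow> real"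
  assumes L: "finite L" and C0: "C \<ge> 0"
    and H: "\<forall>\<rho> \<rho>'. adm_seq A \<rho> \<and> adm_seq A \<rho>' \<and> \<rho> 0 = \<rho>' 0 \<longrightarrow> \<bar>f \<rho> - f \<rho>'\<bar> \<le> C"
  shows "\<exists>B\<ge>0. \<forall>x. adm_seq A x \<and> x 0 \<in> L \<longrightarrow> \<bar>f x\<bar> \<le> B"
proof -
  define pick where "pick e = (SOME x. adm_seq A x \<and> x 0 = e)" for e
  define b where "b e = (if (\<exists>x. adm_seq A x \<and> x 0 = e) then \<bar>f (pick e)\<bar> + C else 0)" for e
  have b0: "b e \<ge> 0" for e unfolding b_def using C0 by auto
  show ?thesis
  proof (intro exI[of _ "\<Sum>e\<in>L. b e"] conjI allI impI)
    show "0 \<le> (\<Sum>e\<in>L. b e)" using b0 by (simp add: sum_nonneg)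
    fix x assume x: "adm_seq A x \<and> x 0 \<in> L"
    have ex: "\<exists>z. adm_seq A z \<and> z 0 = x 0" using x by blast
    then have p: "adm_seq A (pick (x 0)) \<and> pick (x 0) 0 = x 0" unfolding pick_def by (rule someI_ex)
    have "\<bar>f x - f (pick (x 0))\<bar> \<le> C" using H x p by metis
    then have "\<bar>f x\<bar> \<le> b (x 0)" unfolding b_def using ex by auto
    also have "\<dots> \<le> (\<Sum>e\<in>L. b e)" using L x b0 by (intro member_le_sum) auto
    finally show "\<bar>f x\<bar> \<le> (\<Sum>e\<in>L. b e)" .
  qed
qed

lemma connector_bound:
  fixes f :: "(nat \<Rightarrow> 'e) \<Rightarrow> real"
  assumes B: "\<forall>x. adm_seq A x \<and> x 0 \<in> L \<longrightarrow> \<bar>f x\<bar> \<le> B"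
    and adm: "adm_seq A (cat c y)" and cL: "set c \<subseteq> L"
  shows "\<bar>birk_sum f (length c) (cat c y)\<bar> \<le> real (length c) * B"
proof -
  have t: "\<bar>f ((shift^^j) (cat c y))\<bar> \<le> B" if "j < length c" for j
  proof -
    have "(shift^^j) (cat c y) 0 = c ! j" using that by (simp add: shift_pow_apply cat_lt)
    then have "(shift^^j) (cat c y) 0 \<in> L" using that cL by auto
    then show ?thesis using B adm_seq_shift_pow[OF adm] by blast
  qed
  have "\<bar>birk_sum f (length c) (cat c y)\<bar> \<le> (\<Sum>j<length c. \<bar>f ((shift^^j) (cat c y))\<bar>)"
    unfolding birk_sum_def by (rule sum_abs)
  also have "\<dots> \<le> (\<Sum>j<length c. B)" by (rule sum_mono) (use t in auto)
  finally show ?thesis by simp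
qed



lemma adm_word_single[simp]: "adm_word A [a]" by (simp add: adm_word_def)

lemma rep_words:
  fixes A :: "'e \<Rightarrow> 'e \<Rightarrow> bool" and f :: "(nat \<Rightarrow> 'e) \<Rightarrow> real" and \<rho> :: "nat \<Rightarrow> 'e"
  assumes FI: "finitely_irreducible A" and HT: "holder_type A f" and rho: "adm_seq A \<rho>"
  shows "\<exists>D\<ge>0. \<exists>K::nat. \<forall>w\<in>words_before A \<rho>. \<forall>q\<ge>1. \<exists>w'\<in>words_before A \<rho>.
     real q * real (length w) \<le> real (length w') \<and> real (length w') \<le> real q * (real (length w) + real K)
     \<and> \<bar>birk_sum f (length w') (cat w' \<rho>) - real q * birk_sum f (length w) (cat w \<rho>)\<bar> \<le> real q * D"
proof -
  define S where "S u = birk_sum f (length u) (cat u \<rho>)" for u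
  obtain \<Omega> where \<Omega>: "finite \<Omega>" "\<forall>e e'. \<exists>\<omega>\<in>\<Omega>. adm_word A (e # \<omega> @ [e'])"
    using FI unfolding finitely_irreducible_def by blast
  obtain \<alpha> C where al: "\<alpha> > 0" and H: "\<forall>n\<ge>1. \<forall>\<rho> \<rho>'. adm_seq A \<rho> \<and> adm_seq A \<rho>' \<and>
       (\<forall>i<n. \<rho> i = \<rho>' i) \<longrightarrow> \<bar>f \<rho> - f \<rho>'\<bar> * exp (\<alpha> * (real n - 1)) \<le> C"
    using HT unfolding holder_type_def by blast
  have C0: "C \<ge> 0" using H[rule_format, of 1 \<rho> \<rho>] rho by simp
  have H1: "\<forall>\<rho> \<rho>'. adm_seq A \<rho> \<and> adm_seq A \<rho>' \<and> \<rho> 0 = \<rho>' 0 \<longrightarrow> \<bar>f \<rho> - f \<rho>'\<bar> \<le> C"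
    using H[rule_format, of 1] by auto
  define L where "L = \<Union>(set ` \<Omega>)"
  have finL: "finite L" unfolding L_def using \<Omega>(1) by auto
  obtain B where B0: "B \<ge> 0" and B: "\<forall>x. adm_seq A x \<and> x 0 \<in> L \<longrightarrow> \<bar>f x\<bar> \<le> B"
    using letter_bound[OF finL C0 H1] by blast
  define K where "K = Max (length ` \<Omega>)"
  have cK: "length c \<le> K" if "c \<in> \<Omega>" for c unfolding K_def using \<Omega>(1) that by simp
  define Dh where "Dh = C / (1 - exp (-\<alpha>))"
  have Dh0: "Dh \<ge> 0" unfolding Dh_def using al C0 by simp
  define D where "D = Dh + real K * B"
  have D0: "D \<ge> 0" unfolding D_def using Dh0 B0 by simp
  have main: "\<exists>w'\<in>words_before A \<rho>.
     real q * real (length w) \<le> real (length w') \<and> real (length w') \<le> real q * (real (length w) + real K)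
     \<and> \<bar>S w' - real q * S w\<bar> \<le> real q * D" if w: "w \<in> words_before A \<rho>" and q: "q \<ge> 1" for w q
  proof -
    have wne: "w \<noteq> []" and admw: "adm_seq A (cat w \<rho>)" using w words_before_iff by blast+
    have aw: "adm_word A w" using admw adm_seq_cat by blast
    obtain c where c: "c \<in> \<Omega>" "adm_word A (last w # c @ [hd w])" using \<Omega>(2) by blast
    have "adm_word A (c @ [hd w]) \<and> A (last w) (hd (c @ [hd w]))" using c(2) adm_word_Cons by fastforce
    then have ac: "adm_word A c" "c \<noteq> [] \<longrightarrow> A (last c) (hd w)" "A (last w) (if c = [] then hd w else hd c)"
      using adm_word_append[of A c "[hd w]"] by (auto split: if_splits)
    have cL: "set c \<subseteq> L" unfolding L_def using c(1) by auto
    define Wq where "Wq n = concat (replicate n (w @ c)) @ w" for n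
    have WqS: "Wq (Suc n) = w @ (c @ Wq n)" for n by (simp add: Wq_def)
    have claim: "adm_seq A (cat (Wq n) \<rho>) \<and> Wq n \<noteq> [] \<and> hd (Wq n) = hd w \<and>
        length (Wq n) = n * (length w + length c) + length w \<and>
        \<bar>S (Wq n) - real (Suc n) * S w\<bar> \<le> real n * (Dh + real (length c) * B)" for n
    proof (induction n)
      case 0
      have "Wq 0 = w" by (simp add: Wq_def)
      then show ?case using admw wne by simp
    next
      case (Suc n)
      define W where "W = Wq n"
      define Z where "Z = cat W \<rho>"
      define Y where "Y = cat c Z"
      have IH: "adm_seq A Z" "W \<noteq> []" "hd W = hd w" "length W = n * (length w + length c) + length w"
        "\<bar>S W - real (Suc n) * S w\<bar> \<le> real n * (Dh + real (length c) * B)"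
        using Suc unfolding W_def Z_def by auto
      have Z0: "Z 0 = hd w" unfolding Z_def using IH(2,3) by (simp add: cat_0)
      have admY: "adm_seq A Y" unfolding Y_def by (subst adm_seq_cat) (use ac IH(1) Z0 in auto)
      have Y0: "Y 0 = (if c = [] then hd w else hd c)" unfolding Y_def using Z0 by (simp add: cat_0)
      have admX: "adm_seq A (cat w Y)" by (subst adm_seq_cat) (use aw admY ac(3) Y0 in simp)
      have catS: "cat (Wq (Suc n)) \<rho> = cat w Y" unfolding WqS Y_def Z_def W_def by (simp add: cat_append)
      have SS: "S (Wq (Suc n)) = birk_sum f (length w) (cat w Y) + birk_sum f (length c) (cat c Z) + S W"
      proof -
        have "S (Wq (Suc n)) = birk_sum f (length w + (length c + length W)) (cat w Y)"
          unfolding S_def catS by (simp add: WqS W_def)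
        also have "\<dots> = birk_sum f (length w) (cat w Y) + birk_sum f (length c + length W) Y"
          by (rule birk_sum_cat)
        also have "birk_sum f (length c + length W) Y = birk_sum f (length c) (cat c Z) + S W"
          unfolding Y_def S_def Z_def by (rule birk_sum_cat)
        finally show ?thesis by simp
      qed
      have dist: "\<bar>birk_sum f (length w) (cat w Y) - S w\<bar> \<le> Dh"
        unfolding S_def Dh_def
        by (rule holder_distortion[OF al H admX admw]) (simp add: cat_lt)
      have conn: "\<bar>birk_sum f (length c) (cat c Z)\<bar> \<le> real (length c) * B"
        by (rule connector_bound[OF B _ cL]) (use admY Y_def in simp)
      have "\<bar>S (Wq (Suc n)) - real (Suc (Suc n)) * S w\<bar> \<le> real (Suc n) * (Dh + real (length c) * B)"
      proof -
        have e: "S (Wq (Suc n)) - real (Suc (Suc n)) * S w = (birk_sum f (length w) (cat w Y) - S w)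
           + birk_sum f (length c) (cat c Z) + (S W - real (Suc n) * S w)"
          using SS by (simp add: algebra_simps)
        have "\<bar>S (Wq (Suc n)) - real (Suc (Suc n)) * S w\<bar> \<le> \<bar>birk_sum f (length w) (cat w Y) - S w\<bar>
           + \<bar>birk_sum f (length c) (cat c Z)\<bar> + \<bar>S W - real (Suc n) * S w\<bar>"
          unfolding e by (meson abs_triangle_ineq add_mono order_trans order_refl)
        also have "\<dots> \<le> Dh + real (length c) * B + real n * (Dh + real (length c) * B)"
          using dist conn IH(5) by linarith
        also have "\<dots> = real (Suc n) * (Dh + real (length c) * B)" by (simp add: algebra_simps)
        finally show ?thesis .
      qed
      moreover have "length (Wq (Suc n)) = Suc n * (length w + length c) + length w"
        using IH(4) unfolding WqS W_def by simp
      moreover have "hd (Wq (Suc n)) = hd w" using wne unfolding WqS by simp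
      ultimately show ?case using admX catS wne unfolding WqS by simp
    qed
    obtain p where p: "q = Suc p" using q by (cases q) auto
    have cl: "adm_seq A (cat (Wq p) \<rho>)" "Wq p \<noteq> []" "length (Wq p) = p * (length w + length c) + length w"
      "\<bar>S (Wq p) - real q * S w\<bar> \<le> real p * (Dh + real (length c) * B)" using claim[of p] p by auto
    have mem: "Wq p \<in> words_before A \<rho>" using cl words_before_iff by blast
    have l1: "q * length w \<le> length (Wq p)" using cl(3) p by simp
    have l2: "length (Wq p) \<le> q * (length w + K)"
    proof -
      have "length (Wq p) \<le> q * (length w + length c)" using cl(3) p by simp
      also have "\<dots> \<le> q * (length w + K)" using cK[OF c(1)] by simp
      finally show ?thesis .
    qed
    have "real p * (Dh + real (length c) * B) \<le> real q * D"
    proof -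
      have "Dh + real (length c) * B \<le> D" unfolding D_def using cK[OF c(1)] B0 by (simp add: mult_right_mono)
      moreover have "Dh + real (length c) * B \<ge> 0" using Dh0 B0 by simp
      ultimately have "real p * (Dh + real (length c) * B) \<le> real p * D" by (simp add: mult_left_mono)
      also have "\<dots> \<le> real q * D" using p D0 by (simp add: mult_right_mono)
      finally show ?thesis .
    qed
    then have "\<bar>S (Wq p) - real q * S w\<bar> \<le> real q * D" using cl(4) by linarith
    moreover have "real q * real (length w) \<le> real (length (Wq p))" using l1 by (metis of_nat_le_iff of_nat_mult)
    moreover have "real (length (Wq p)) \<le> real q * (real (length w) + real K)" using l2 by (metis of_nat_le_iff of_nat_mult of_nat_add)
    ultimately show ?thesis using mem by blast
  qed
  show ?thesis using D0 main unfolding S_def by blast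
qed

lemma words_exist:
  assumes FI: "finitely_irreducible A" and rho: "adm_seq A \<rho>" and n: "n \<ge> 1"
  shows "\<exists>w\<in>words_before A \<rho>. length w = n"
proof -
  obtain \<Omega> where \<Omega>: "\<forall>e e'. \<exists>\<omega>\<in>\<Omega>. adm_word A (e # \<omega> @ [e'])"
    using FI unfolding finitely_irreducible_def by blast
  have pred: "\<exists>e. A e x" for x
  proof -
    obtain \<omega> where "adm_word A (undefined # \<omega> @ [x])" using \<Omega> by blast
    then have "adm_word A ((undefined # \<omega>) @ [x])" by simp
    then have "A (last (undefined # \<omega>)) x" using adm_word_append[of A "undefined # \<omega>" "[x]"] by simp
    then show ?thesis by blast
  qed
  have "\<exists>w\<in>words_before A \<rho>. length w = Suc m" for m
  proof (induction m)
    case 0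
    obtain e where "A e (\<rho> 0)" using pred by blast
    then have "[e] \<in> words_before A \<rho>" using rho by (simp add: words_before_iff adm_seq_cat)
    then show ?case by force
  next
    case (Suc m)
    then obtain w where w: "w \<in> words_before A \<rho>" "length w = Suc m" by blast
    obtain e where e: "A e (hd w)" using pred by blast
    have wne: "w \<noteq> []" and aw: "adm_seq A (cat w \<rho>)" using w(1) words_before_iff by blast+
    have "adm_seq A (cat [e] (cat w \<rho>))" using aw e wne by (simp add: adm_seq_cat cat_0)
    then have "e # w \<in> words_before A \<rho>" by (simp add: words_before_iff cat_append[of "[e]" w, symmetric])
    then show ?case using w(2) by force
  qed
  then show ?thesis using n by (metis Suc_le_D One_nat_def)
qed

theorem mainTheorem2:
  fixes A :: "'e::countable \<Rightarrow> 'e \<Rightarrow> bool"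
    and f :: "(nat \<Rightarrow> 'e) \<Rightarrow> real"
    and \<delta> :: real and \<rho> :: "nat \<Rightarrow> 'e"
  assumes "finitely_irreducible A"
    and "strongly_regular A f" and "holder_type A f"
    and "\<delta> > 0" and "pressure A (\<lambda>x. \<delta> * f x) = 0"
    and "adm_seq A \<rho>"
  shows "(\<exists>L::ereal. ((\<lambda>T. m_fun A f \<rho> T / ereal T) \<longlongrightarrow> L) at_top) \<and>
         (\<exists>L::ereal. ((\<lambda>T. M_fun A f \<rho> T / ereal T) \<longlongrightarrow> L) at_top)"
proof -
  note FI = assms(1) and HT = assms(3) and rho = assms(6)
  obtain D and K :: nat where D0: "D \<ge> 0" and R: "\<forall>w\<in>words_before A \<rho>. \<forall>q\<ge>1. \<exists>w'\<in>words_before A \<rho>.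
     real q * real (length w) \<le> real (length w') \<and> real (length w') \<le> real q * (real (length w) + real K)
     \<and> \<bar>birk_sum f (length w') (cat w' \<rho>) - real q * birk_sum f (length w) (cat w \<rho>)\<bar> \<le> real q * D"
    using rep_words[OF FI HT rho] by blast
  obtain w1 where w1: "w1 \<in> words_before A \<rho>" using words_exist[OF FI rho, of 1] by auto
  have P1: "\<exists>L::ereal. ((\<lambda>T. m_fun A f \<rho> T / ereal T) \<longlongrightarrow> L) at_top"
  proof -
    have "\<exists>L. ((\<lambda>T. Sup {ereal (real (length w)) | w. w \<in> words_before A \<rho> \<and>
      (\<forall>w'\<in>words_before A \<rho>. length w' \<le> length w \<longrightarrow> birk_sum f (length w') (cat w' \<rho>) \<ge> -T)} / ereal T) \<longlongrightarrow> L) at_top"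
    proof (rule abstract_m[where D = D and K = K])
      show "\<exists>w\<in>words_before A \<rho>. length w = n" if "n \<ge> 1" for n using words_exist[OF FI rho that] .
      show "0 \<le> D" by (rule D0)
      fix w q assume "w \<in> words_before A \<rho>" "(1::nat) \<le> q"
      then obtain w' where "w' \<in> words_before A \<rho>" "real (length w') \<le> real q * (real (length w) + real K)"
        "\<bar>birk_sum f (length w') (cat w' \<rho>) - real q * birk_sum f (length w) (cat w \<rho>)\<bar> \<le> real q * D"
        using R by blast
      then show "\<exists>w'\<in>words_before A \<rho>. real (length w') \<le> real q * (real (length w) + real K) \<and>
          birk_sum f (length w') (cat w' \<rho>) \<le> real q * (birk_sum f (length w) (cat w \<rho>) + D)"
        by (intro bexI[of _ w']) (auto simp: algebra_simps abs_le_iff)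
    qed
    then show ?thesis unfolding m_fun_def .
  qed
  have P2: "\<exists>L::ereal. ((\<lambda>T. M_fun A f \<rho> T / ereal T) \<longlongrightarrow> L) at_top"
  proof -
    have "\<exists>L. ((\<lambda>T. Sup {ereal (real (length w)) | w. w \<in> words_before A \<rho> \<and>
       birk_sum f (length w) (cat w \<rho>) \<ge> -T} / ereal T) \<longlongrightarrow> L) at_top"
    proof (rule abstract_M[where D = D, OF w1])
      show "0 \<le> D" by (rule D0)
      fix w q assume "w \<in> words_before A \<rho>" "(1::nat) \<le> q"
      then obtain w' where "w' \<in> words_before A \<rho>" "real q * real (length w) \<le> real (length w')"
        "\<bar>birk_sum f (length w') (cat w' \<rho>) - real q * birk_sum f (length w) (cat w \<rho>)\<bar> \<le> real q * D"
        using R by blast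
      then show "\<exists>w'\<in>words_before A \<rho>. real q * real (length w) \<le> real (length w') \<and>
          real q * (birk_sum f (length w) (cat w \<rho>) - D) \<le> birk_sum f (length w') (cat w' \<rho>)"
        by (intro bexI[of _ w']) (auto simp: algebra_simps abs_le_iff)
    qed
    then show ?thesis unfolding M_fun_def .
  qed
  show ?thesis using P1 P2 by blast
qed


end
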